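(* Let $\omega_0>0$, $\gamma>0$, and consider the control system $\dot X(t)=-i\big(\omega_0C_z+u_xB_x+u_yB_y+u_zB_z\big)X(t)$, $X(0)=I_4$, with admissible controls $u_x^2+u_y^2+u_z^2\le\gamma^2$. Let the target be a SWAP-equivalent operator $$X_f=\begin{pmatrix}0&e^{i\varphi}\\-e^{-i\varphi}&0\end{pmatrix},\qquad\varphi\in\mathbb{R},$$ and consider an extremal trajectory on $[0,t_f]$ steering $X$ from $I_4$ to $X(t_f)=\mathrm{diag}(Y_1,Y_2)$ with $Y_1,Y_2\in\{X_f,-X_f\}$. Then no singular arc of this extremal trajectory can be at the beginning of the trajectory (i.e. contain an interval $[0,\epsilon)$, $\epsilon>0$) or at its end (i.e. contain an interval $(t_f-\epsilon,t_f]$).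
   Context: $S_k=\frac12\sigma_k$ ($k=x,y,z$) with $\sigma_k$ the Pauli matrices; $B_k=\mathrm{diag}(S_k,S_k)$ and $C_k=\mathrm{diag}(S_k,-S_k)$ are $4\times4$ block-diagonal matrices, so $X(t)=\mathrm{diag}(X_1(t),X_2(t))$ with $X_1,X_2\in SU(2)$. Costate: a nonzero matrix $M$ in the real Lie algebra $\mathfrak l$ spanned by $iB_k,iC_k$ ($k=x,y,z$). Given $M$ and a trajectory $X$, define $b_k(t)=i\,\mathrm{Tr}(M X(t)^\dagger B_k X(t))$ and $c_k(t)=i\,\mathrm{Tr}(M X(t)^\dagger C_k X(t))$. The Pontryagin Hamiltonian is $H(M,X,v)=\omega_0c_z+\sum_{k}v_kb_k$. An extremal is an admissible control $u$ with trajectory $X$ for which there exist $M\neq0$ in $\mathfrak l$ and a constant $\lambda$ such that for a.e. $t$, $H(M,X(t),u(t))\ge H(M,X(t),v)$ for all $v$ with $v_x^2+v_y^2+v_z^2\le\gamma^2$, and $H(M,X(t),u(t))=\lambda$. A singular arc is an interval of positive length on which $b_x\equiv b_y\equiv b_z\equiv0$. *)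

theory Defs
  imports "HOL-Analysis.Analysis" "HOL-Library.Numeral_Type"
begin

type_synonym cmat2 = "complex^2^2"
type_synonym cmat4 = "complex^4^4"

definition csc :: "complex \<Rightarrow> complex^'n^'m \<Rightarrow> complex^'n^'m" where
  "csc c A = (\<chi> i j. c * A $ i $ j)"

definition ctrans :: "complex^'n^'m \<Rightarrow> complex^'m^'n" where
  "ctrans A = (\<chi> i j. cnj (A $ j $ i))"

definition mat2 :: "complex \<Rightarrow> complex \<Rightarrow> complex \<Rightarrow> complex \<Rightarrow> cmat2" where
  "mat2 a b c d = (\<chi> i j. if i = 0 then (if j = 0 then a else b) else (if j = 0 then c else d))"

text \<open>S_k = sigma_k / 2.\<close>
definition Sx :: cmat2 where "Sx = mat2 0 (1/2) (1/2) 0"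
definition Sy :: cmat2 where "Sy = mat2 0 (-\<i>/2) (\<i>/2) 0"
definition Sz :: cmat2 where "Sz = mat2 (1/2) 0 0 (-1/2)"

definition idx42 :: "4 \<Rightarrow> 2" where
  "idx42 i = (if i = 0 \<or> i = 2 then 0 else 1)"

definition blockdiag :: "cmat2 \<Rightarrow> cmat2 \<Rightarrow> cmat4" where
  "blockdiag A B = (\<chi> i j.
     if (i = 0 \<or> i = 1) \<and> (j = 0 \<or> j = 1) then A $ idx42 i $ idx42 j
     else if (i = 2 \<or> i = 3) \<and> (j = 2 \<or> j = 3) then B $ idx42 i $ idx42 j
     else 0)"

definition Bx :: cmat4 where "Bx = blockdiag Sx Sx"
definition By :: cmat4 where "By = blockdiag Sy Sy"
definition Bz :: cmat4 where "Bz = blockdiag Sz Sz"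
definition Cx :: cmat4 where "Cx = blockdiag Sx (-Sx)"
definition Cy :: cmat4 where "Cy = blockdiag Sy (-Sy)"
definition Cz :: cmat4 where "Cz = blockdiag Sz (-Sz)"

definition lie_l :: "cmat4 set" where
  "lie_l = {csc \<i> (a1 *\<^sub>R Bx + a2 *\<^sub>R By + a3 *\<^sub>R Bz + c1 *\<^sub>R Cx + c2 *\<^sub>R Cy + c3 *\<^sub>R Cz)
            | a1 a2 a3 c1 c2 c3 :: real. True}"

text \<open>The quantity i Tr(M X^dagger K X); it is real for M in l, X unitary, K Hermitian,
  so we take its real part.\<close>
definition pcoef :: "cmat4 \<Rightarrow> cmat4 \<Rightarrow> cmat4 \<Rightarrow> real" where
  "pcoef M X K = Re (\<i> * trace (M ** ctrans X ** K ** X))"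

definition pmp_H :: "real \<Rightarrow> cmat4 \<Rightarrow> cmat4 \<Rightarrow> real \<Rightarrow> real \<Rightarrow> real \<Rightarrow> real" where
  "pmp_H \<omega>0 M X vx vy vz =
     \<omega>0 * pcoef M X Cz + vx * pcoef M X Bx + vy * pcoef M X By + vz * pcoef M X Bz"

definition Hsys :: "real \<Rightarrow> real \<Rightarrow> real \<Rightarrow> real \<Rightarrow> cmat4" where
  "Hsys \<omega>0 ux uy uz = \<omega>0 *\<^sub>R Cz + ux *\<^sub>R Bx + uy *\<^sub>R By + uz *\<^sub>R Bz"

definition admissible :: "real \<Rightarrow> real \<Rightarrow> (real \<Rightarrow> real) \<Rightarrow> (real \<Rightarrow> real) \<Rightarrow> (real \<Rightarrow> real) \<Rightarrow> bool" where
  "admissible \<gamma> tf ux uy uz \<longleftrightarrow>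
     ux \<in> borel_measurable (lebesgue_on {0..tf}) \<and>
     uy \<in> borel_measurable (lebesgue_on {0..tf}) \<and>
     uz \<in> borel_measurable (lebesgue_on {0..tf}) \<and>
     (\<forall>t\<in>{0..tf}. (ux t)\<^sup>2 + (uy t)\<^sup>2 + (uz t)\<^sup>2 \<le> \<gamma>\<^sup>2)"

text \<open>X is the (Caratheodory) solution of dX/dt = -i H(t) X, X(0) = I on [0,tf],
  i.e. X(t) = I + integral_0^t (-i H(s) X(s)) ds.\<close>
definition trajectory :: "real \<Rightarrow> real \<Rightarrow> (real \<Rightarrow> real) \<Rightarrow> (real \<Rightarrow> real) \<Rightarrow> (real \<Rightarrow> real)
                            \<Rightarrow> (real \<Rightarrow> cmat4) \<Rightarrow> bool" where
  "trajectory \<omega>0 tf ux uy uz X \<longleftrightarrow>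
     (\<forall>t\<in>{0..tf}. ((\<lambda>s. csc (-\<i>) (Hsys \<omega>0 (ux s) (uy s) (uz s) ** X s)) has_integral (X t - mat 1)) {0..t})"

definition extremal :: "real \<Rightarrow> real \<Rightarrow> real \<Rightarrow> (real \<Rightarrow> real) \<Rightarrow> (real \<Rightarrow> real) \<Rightarrow> (real \<Rightarrow> real)
                          \<Rightarrow> (real \<Rightarrow> cmat4) \<Rightarrow> cmat4 \<Rightarrow> bool" where
  "extremal \<omega>0 \<gamma> tf ux uy uz X M \<longleftrightarrow>
     M \<in> lie_l \<and> M \<noteq> 0 \<and>
     (\<exists>lam::real. AE t in lebesgue. t \<in> {0..tf} \<longrightarrow>
        ((\<forall>vx vy vz. vx\<^sup>2 + vy\<^sup>2 + vz\<^sup>2 \<le> \<gamma>\<^sup>2 \<longrightarrow>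
            pmp_H \<omega>0 M (X t) (ux t) (uy t) (uz t) \<ge> pmp_H \<omega>0 M (X t) vx vy vz) \<and>
         pmp_H \<omega>0 M (X t) (ux t) (uy t) (uz t) = lam))"

definition Xf :: "real \<Rightarrow> cmat2" where
  "Xf \<phi> = mat2 0 (cis \<phi>) (- cis (-\<phi>)) 0"

end

theory Submission
  imports Defs
begin

lemma two2: "(2::2) = 0" by simp
lemma four4: "(4::4) = 0" by simp
lemma UNIV2': "(UNIV::2 set) = {0,1}" using exhaust_2 by (metis UNIV_2 two2 insert_commute)
lemma sum2: "sum f (UNIV::2 set) = f 0 + f 1" unfolding UNIV2' by simp
lemma UNIV4': "(UNIV::4 set) = {0,1,2,3}" using UNIV_4 four4 by (auto simp: insert_commute)
lemma sum4: "sum f (UNIV::4 set) = f 0 + f 1 + f 2 + f 3" unfolding UNIV4' by (simp add: ac_simps)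
lemma all2: "(\<forall>i::2. P i) \<longleftrightarrow> P 0 \<and> P 1" by (metis UNIV2' UNIV_I insertE singletonD)
lemma all4: "(\<forall>i::4. P i) \<longleftrightarrow> P 0 \<and> P 1 \<and> P 2 \<and> P 3" using UNIV4' by (metis UNIV_I insertE singletonD insertI1 insertI2)

lemma mat2_eq: "A = mat2 (A$0$0) (A$0$1) (A$1$0) (A$1$1)"
  by (simp add: vec_eq_iff mat2_def all2)


lemma csc_mult_left: "csc c A ** B = csc c (A ** B)"
  by (simp add: vec_eq_iff csc_def matrix_matrix_mult_def sum_distrib_left mult.assoc)
lemma csc_mult_right: "A ** csc c B = csc c (A ** B)"
  by (simp add: vec_eq_iff csc_def matrix_matrix_mult_def sum_distrib_left mult.left_commute)
lemma ctrans_mult: "ctrans (A ** B) = ctrans B ** ctrans A"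
  by (simp add: vec_eq_iff ctrans_def matrix_matrix_mult_def mult.commute)
lemma ctrans_csc: "ctrans (csc c A) = csc (cnj c) (ctrans A)"
  by (simp add: vec_eq_iff ctrans_def csc_def)
lemma ctrans_add: "ctrans (A + B) = ctrans A + ctrans B"
  by (simp add: vec_eq_iff ctrans_def)
lemma ctrans_diff: "ctrans (A - B) = ctrans A - ctrans B"
  by (simp add: vec_eq_iff ctrans_def)
lemma ctrans_uminus: "ctrans (- A) = - ctrans A"
  by (simp add: vec_eq_iff ctrans_def)
lemma ctrans_scaleR: "ctrans (r *\<^sub>R A) = r *\<^sub>R ctrans A"
  by (simp add: vec_eq_iff ctrans_def complex_cnj_scaleR)
lemma trace_csc: "trace (csc c A) = c * trace A"
  by (simp add: trace_def csc_def sum_distrib_left)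
lemma trace_scaleR: "trace (r *\<^sub>R (A::complex^'n^'n)) = r *\<^sub>R trace A"
  by (simp add: trace_def scaleR_sum_right)
lemma scaleR_mult_left: "(r *\<^sub>R (A::complex^'n^'m)) ** B = r *\<^sub>R (A ** B)"
  by (simp add: vec_eq_iff matrix_matrix_mult_def scaleR_sum_right)
lemma scaleR_mult_right: "(A::complex^'n^'m) ** (r *\<^sub>R B) = r *\<^sub>R (A ** B)"
  by (simp add: vec_eq_iff matrix_matrix_mult_def scaleR_sum_right)
lemma ctrans_one: "ctrans (mat 1 :: complex^'n^'n) = mat 1"
  by (simp add: vec_eq_iff ctrans_def mat_def)

lemma mat2_mult: "mat2 a b c d ** mat2 e f g h = mat2 (a*e+b*g) (a*f+b*h) (c*e+d*g) (c*f+d*h)"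
  by (simp add: vec_eq_iff mat2_def matrix_matrix_mult_def sum2 all2)
lemma mat2_ctrans: "ctrans (mat2 a b c d) = mat2 (cnj a) (cnj c) (cnj b) (cnj d)"
  by (simp add: vec_eq_iff mat2_def ctrans_def all2)
lemma mat2_trace: "trace (mat2 a b c d) = a + d"
  by (simp add: mat2_def trace_def sum2)
lemma mat2_csc: "csc z (mat2 a b c d) = mat2 (z*a) (z*b) (z*c) (z*d)"
  by (simp add: vec_eq_iff mat2_def csc_def all2)
lemma mat2_add: "mat2 a b c d + mat2 e f g h = mat2 (a+e) (b+f) (c+g) (d+h)"
  by (simp add: vec_eq_iff mat2_def all2)
lemma mat2_diff: "mat2 a b c d - mat2 e f g h = mat2 (a-e) (b-f) (c-g) (d-h)"
  by (simp add: vec_eq_iff mat2_def all2)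
lemma mat2_uminus: "- mat2 a b c d = mat2 (-a) (-b) (-c) (-d)"
  by (simp add: vec_eq_iff mat2_def all2)
lemma mat2_scaleR: "r *\<^sub>R mat2 a b c d = mat2 (r *\<^sub>R a) (r *\<^sub>R b) (r *\<^sub>R c) (r *\<^sub>R d)"
  by (simp add: vec_eq_iff mat2_def all2)
lemma mat2_one: "(mat 1 :: cmat2) = mat2 1 0 0 1"
  by (simp add: vec_eq_iff mat2_def all2 mat_def)
lemma mat2_zero: "(0 :: cmat2) = mat2 0 0 0 0"
  by (simp add: vec_eq_iff mat2_def all2)

lemma bd_mult: "blockdiag A B ** blockdiag C D = blockdiag (A ** C) (B ** D)"
  by (simp add: vec_eq_iff all4 matrix_matrix_mult_def blockdiag_def sum4 idx42_def sum2)
lemma bd_ctrans: "ctrans (blockdiag A B) = blockdiag (ctrans A) (ctrans B)"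
  by (simp add: vec_eq_iff all4 ctrans_def blockdiag_def idx42_def)
lemma bd_trace: "trace (blockdiag A B) = trace A + trace B"
  by (simp add: trace_def blockdiag_def sum4 idx42_def sum2)
lemma bd_csc: "csc c (blockdiag A B) = blockdiag (csc c A) (csc c B)"
  by (simp add: vec_eq_iff all4 csc_def blockdiag_def idx42_def)
lemma bd_add: "blockdiag A B + blockdiag C D = blockdiag (A + C) (B + D)"
  by (simp add: vec_eq_iff all4 blockdiag_def idx42_def)
lemma bd_diff: "blockdiag A B - blockdiag C D = blockdiag (A - C) (B - D)"
  by (simp add: vec_eq_iff all4 blockdiag_def idx42_def)
lemma bd_uminus: "- blockdiag A B = blockdiag (-A) (-B)"
  by (simp add: vec_eq_iff all4 blockdiag_def idx42_def)
lemma bd_scaleR: "r *\<^sub>R blockdiag A B = blockdiag (r *\<^sub>R A) (r *\<^sub>R B)"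
  by (simp add: vec_eq_iff all4 blockdiag_def idx42_def)
lemma bd_one: "(mat 1 :: cmat4) = blockdiag (mat 1) (mat 1)"
  by (simp add: vec_eq_iff all4 blockdiag_def idx42_def mat_def)


lemma matrix_add_rdistrib: "((B + C) ** A) = (B ** A) + (C ** A)"
  by (simp add: matrix_matrix_mult_def vec_eq_iff algebra_simps sum.distrib)
lemma matrix_diff_ldistrib: "((A::complex^'n^'m) ** (B - C)) = (A ** B) - (A ** C)"
  by (simp add: matrix_matrix_mult_def vec_eq_iff right_diff_distrib left_diff_distrib sum_subtractf)
lemma matrix_diff_rdistrib: "((B - C) ** (A::complex^'n^'m)) = (B ** A) - (C ** A)"
  by (simp add: matrix_matrix_mult_def vec_eq_iff right_diff_distrib left_diff_distrib sum_subtractf)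

lemma bb_mult: "bounded_bilinear ((**) :: cmat4 \<Rightarrow> cmat4 \<Rightarrow> cmat4)"
  unfolding bilinear_conv_bounded_bilinear[symmetric] bilinear_def
  by (auto intro!: linearI simp: matrix_add_ldistrib matrix_add_rdistrib scaleR_mult_left scaleR_mult_right)

definition hq :: "cmat4 \<Rightarrow> cmat4 \<Rightarrow> cmat4 \<Rightarrow> cmat4 \<Rightarrow> real" where
  "hq N K A B = Re (\<i> * trace (N ** ctrans A ** K ** B))"

lemma bb_hq: "bounded_bilinear (hq N K)"
  unfolding bilinear_conv_bounded_bilinear[symmetric] bilinear_def hq_def
  by (auto intro!: linearI simp: matrix_add_ldistrib matrix_add_rdistrib scaleR_mult_left scaleR_mult_right
     ctrans_add ctrans_scaleR trace_add trace_scaleR algebra_simps)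

lemma pcoef_hq: "pcoef M X K = hq M K X X"
  by (simp add: pcoef_def hq_def)

lemma bl_ctrans: "bounded_linear (ctrans :: cmat4 \<Rightarrow> cmat4)"
  unfolding linear_conv_bounded_linear[symmetric]
  by (auto intro!: linearI simp: ctrans_add ctrans_scaleR)

lemma bl_csc: "bounded_linear (csc c :: cmat4 \<Rightarrow> cmat4)"
  unfolding linear_conv_bounded_linear[symmetric]
  by (auto intro!: linearI simp: csc_def vec_eq_iff algebra_simps scaleR_conv_of_real)


lemmas bsimps = Bx_def By_def Bz_def Cx_def Cy_def Cz_def Sx_def Sy_def Sz_def
  bd_mult bd_ctrans bd_trace bd_csc bd_add bd_diff bd_uminus bd_scaleR bd_one
  mat2_mult mat2_ctrans mat2_trace mat2_csc mat2_add mat2_diff mat2_uminus mat2_scaleR mat2_one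
  csc_mult_left csc_mult_right ctrans_csc scaleR_mult_left scaleR_mult_right
  Hsys_def Xf_def

definition "Mof a1 a2 a3 c1 c2 c3 = csc \<i> (a1 *\<^sub>R Bx + a2 *\<^sub>R By + a3 *\<^sub>R Bz + c1 *\<^sub>R Cx + c2 *\<^sub>R Cy + c3 *\<^sub>R Cz)"

lemma at_one:
  "pcoef (Mof a1 a2 a3 c1 c2 c3) (mat 1) Bx = - a1"
  "pcoef (Mof a1 a2 a3 c1 c2 c3) (mat 1) By = - a2"
  "pcoef (Mof a1 a2 a3 c1 c2 c3) (mat 1) Bz = - a3"
  "pcoef (Mof a1 a2 a3 c1 c2 c3) (mat 1) Cz = - c3"
  by (simp_all add: pcoef_def Mof_def bsimps algebra_simps)

lemma at_Y:
  assumes "Y1 \<in> {Xf p, - Xf p}" "Y2 \<in> {Xf p, - Xf p}"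
  shows
  "pcoef (Mof a1 a2 a3 c1 c2 c3) (blockdiag Y1 Y2) Bx = a1 * (cos p * cos p - sin p * sin p) - a2 * (2 * sin p * cos p)"
  "pcoef (Mof a1 a2 a3 c1 c2 c3) (blockdiag Y1 Y2) By = - a2 * (cos p * cos p - sin p * sin p) - a1 * (2 * sin p * cos p)"
  "pcoef (Mof a1 a2 a3 c1 c2 c3) (blockdiag Y1 Y2) Bz = a3"
  "pcoef (Mof a1 a2 a3 c1 c2 c3) (blockdiag Y1 Y2) Cz = c3"
  using assms by (auto simp add: pcoef_def Mof_def bsimps algebra_simps)

lemma L_one:
  "hq (Mof 0 0 0 c1 c2 c3) Bx (csc (-\<i>) (Hsys w ux uy uz) ** mat 1) (mat 1) + hq (Mof 0 0 0 c1 c2 c3) Bx (mat 1) (csc (-\<i>) (Hsys w ux uy uz) ** mat 1) = c2 * w"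
  "hq (Mof 0 0 0 c1 c2 c3) By (csc (-\<i>) (Hsys w ux uy uz) ** mat 1) (mat 1) + hq (Mof 0 0 0 c1 c2 c3) By (mat 1) (csc (-\<i>) (Hsys w ux uy uz) ** mat 1) = - c1 * w"
  by (simp_all add: hq_def Mof_def bsimps algebra_simps)

lemma L_Y:
  assumes "Y1 \<in> {Xf p, - Xf p}" "Y2 \<in> {Xf p, - Xf p}"
  shows
  "hq (Mof 0 0 0 c1 c2 c3) Bx (csc (-\<i>) (Hsys w ux uy uz) ** blockdiag Y1 Y2) (blockdiag Y1 Y2) + hq (Mof 0 0 0 c1 c2 c3) Bx (blockdiag Y1 Y2) (csc (-\<i>) (Hsys w ux uy uz) ** blockdiag Y1 Y2)
     = w * (c2 * (cos p * cos p - sin p * sin p) + c1 * (2 * sin p * cos p))"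
  "hq (Mof 0 0 0 c1 c2 c3) By (csc (-\<i>) (Hsys w ux uy uz) ** blockdiag Y1 Y2) (blockdiag Y1 Y2) + hq (Mof 0 0 0 c1 c2 c3) By (blockdiag Y1 Y2) (csc (-\<i>) (Hsys w ux uy uz) ** blockdiag Y1 Y2)
     = w * (c1 * (cos p * cos p - sin p * sin p) - c2 * (2 * sin p * cos p))"
  using assms by (auto simp add: hq_def Mof_def bsimps algebra_simps)

lemma Mof_zero: "Mof 0 0 0 0 0 0 = 0"
  by (simp add: Mof_def csc_def vec_eq_iff)


lemma AE_interval_False:
  fixes a b :: real
  assumes ae: "AE t in lebesgue. P t" and ab: "a < b" and bad: "\<forall>t\<in>{a..b}. \<not> P t"
  shows False
proof -
  from ae obtain N where N: "{x \<in> space lebesgue. \<not> P x} \<subseteq> N" "emeasure lebesgue N = 0" "N \<in> sets lebesgue"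
    by (rule AE_E)
  have "negligible N" using N negligible_iff_emeasure0 by blast
  moreover have "{a..b} \<subseteq> N" using N(1) bad by auto
  ultimately have "negligible (cbox a b)" using negligible_subset by (metis cbox_interval)
  then have "box a b = {}" by (simp only: negligible_interval)
  with ab show False by (simp add: box_real cbox_interval)
qed

lemma key:
  fixes \<Psi> Q :: "cmat4 \<Rightarrow> real" and F e :: "real \<Rightarrow> cmat4" and lo :: "real \<Rightarrow> real"
  assumes bl: "bounded_linear \<Psi>"
    and dpos: "\<delta> > 0"
    and K: "K \<ge> 0"
    and int: "\<And>\<tau>. 0 < \<tau> \<Longrightarrow> \<tau> < \<delta> \<Longrightarrow> (F has_integral e \<tau>) {lo \<tau>..lo \<tau> + \<tau>}"
    and Fb: "\<And>\<tau> s. 0 < \<tau> \<Longrightarrow> \<tau> < \<delta> \<Longrightarrow> s \<in> {lo \<tau>..lo \<tau> + \<tau>} \<Longrightarrow> norm (F s) \<le> K"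
    and rho: "\<And>\<tau> s. 0 < \<tau> \<Longrightarrow> \<tau> < \<delta> \<Longrightarrow> s \<in> {lo \<tau>..lo \<tau> + \<tau>} \<Longrightarrow> \<bar>\<Psi> (F s) - L\<bar> \<le> K * \<tau>"
    and Qb: "\<And>E. \<bar>Q E\<bar> \<le> K * (norm E)^2"
    and zero: "\<And>\<tau>. 0 < \<tau> \<Longrightarrow> \<tau> < \<delta> \<Longrightarrow> \<Psi> (e \<tau>) + Q (e \<tau>) = 0"
  shows "L = 0"
proof -
  have bnd: "\<bar>L\<bar> \<le> (K + K^3) * \<tau>" if t: "0 < \<tau>" "\<tau> < \<delta>" for \<tau>
  proof -
    let ?I = "{lo \<tau>..lo \<tau> + \<tau>}"
    have ct: "Henstock_Kurzweil_Integration.content ?I = \<tau>" using t by (simp add: content_real)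
    have i1: "((\<Psi> \<circ> F) has_integral \<Psi> (e \<tau>)) ?I"
      by (rule has_integral_linear[OF int[OF t] bl])
    have i2: "((\<lambda>s. L) has_integral (\<tau> * L)) ?I"
      using has_integral_const_real[of L "lo \<tau>" "lo \<tau> + \<tau>"] ct by simp
    have i3: "((\<lambda>s. \<Psi> (F s) - L) has_integral (\<Psi> (e \<tau>) - \<tau> * L)) ?I"
      using has_integral_diff[OF i1 i2] by (simp add: o_def)
    have b1: "norm (\<Psi> (e \<tau>) - \<tau> * L) \<le> (K * \<tau>) * Henstock_Kurzweil_Integration.content (cbox (lo \<tau>) (lo \<tau> + \<tau>))"
      apply (rule has_integral_bound[where f = "\<lambda>s. \<Psi> (F s) - L"])
      using K t i3 rho[OF t] by (auto simp: cbox_interval)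
    have b2: "norm (e \<tau>) \<le> K * Henstock_Kurzweil_Integration.content (cbox (lo \<tau>) (lo \<tau> + \<tau>))"
      apply (rule has_integral_bound[where f = F])
      using K t int[OF t] Fb[OF t] by (auto simp: cbox_interval)
    have b1': "\<bar>\<Psi> (e \<tau>) - \<tau> * L\<bar> \<le> K * \<tau> * \<tau>" using b1 ct by (simp add: cbox_interval)
    have b2': "norm (e \<tau>) \<le> K * \<tau>" using b2 ct by (simp add: cbox_interval)
    have "(norm (e \<tau>))^2 \<le> (K * \<tau>)^2"
      using b2' by (simp add: power_mono)
    then have b3: "\<bar>Q (e \<tau>)\<bar> \<le> K * (K * \<tau>)^2"
      using Qb[of "e \<tau>"] K by (meson mult_left_mono order_trans)
    have "\<bar>\<tau> * L\<bar> \<le> \<bar>\<Psi> (e \<tau>) - \<tau> * L\<bar> + \<bar>Q (e \<tau>)\<bar>"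
      using zero[OF t] by linarith
    also have "\<dots> \<le> K * \<tau> * \<tau> + K * (K * \<tau>)^2" using b1' b3 by linarith
    also have "\<dots> = ((K + K^3) * \<tau>) * \<tau>" by (simp add: power2_eq_square power3_eq_cube algebra_simps)
    finally have "\<tau> * \<bar>L\<bar> \<le> ((K + K^3) * \<tau>) * \<tau>" using t by (simp add: abs_mult)
    then show ?thesis using t by (simp add: mult.commute)
  qed
  show "L = 0"
  proof (rule ccontr)
    assume "L \<noteq> 0"
    define C where "C = K + K^3"
    have C: "C \<ge> 0" using K by (simp add: C_def)
    define \<tau> where "\<tau> = min (\<delta>/2) (\<bar>L\<bar> / (2 * C + 2))"
    have t: "0 < \<tau>" "\<tau> < \<delta>" using dpos \<open>L \<noteq> 0\<close> C by (auto simp: \<tau>_def)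
    have "C * \<tau> \<le> C * (\<bar>L\<bar> / (2 * C + 2))" using C by (intro mult_left_mono) (auto simp: \<tau>_def)
    also have "\<dots> < \<bar>L\<bar>" using C \<open>L \<noteq> 0\<close> by (simp add: field_simps add_nonneg_pos)
    finally show False using bnd[OF t] by (simp add: C_def)
  qed
qed


lemma bb_obtain:
  assumes "bounded_bilinear h"
  obtains K where "K > 0" "\<And>a b. norm (h a b) \<le> norm a * norm b * K"
  using bounded_bilinear.pos_bounded[OF assms] by auto

lemma deriv_lemma:
  fixes N Kk Y :: cmat4 and F G D Z e :: "real \<Rightarrow> cmat4" and lo :: "real \<Rightarrow> real"
  assumes dpos: "\<delta> > 0"
    and sg: "\<sigma> = 1 \<or> \<sigma> = -1"
    and int: "\<And>\<tau>. 0<\<tau> \<Longrightarrow> \<tau><\<delta> \<Longrightarrow> (F has_integral e \<tau>) {lo \<tau>..lo \<tau> + \<tau>}"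
    and Zrel: "\<And>\<tau>. 0<\<tau> \<Longrightarrow> \<tau><\<delta> \<Longrightarrow> Z \<tau> = Y + \<sigma> *\<^sub>R e \<tau>"
    and zero: "\<And>\<tau>. 0<\<tau> \<Longrightarrow> \<tau><\<delta> \<Longrightarrow> hq N Kk (Z \<tau>) (Z \<tau>) = 0"
    and base: "hq N Kk Y Y = 0"
    and Fdec: "\<And>\<tau> s. 0<\<tau> \<Longrightarrow> \<tau><\<delta> \<Longrightarrow> s \<in> {lo \<tau>..lo \<tau>+\<tau>} \<Longrightarrow> F s = G s ** Y + G s ** D s"
    and Lval: "\<And>\<tau> s. 0<\<tau> \<Longrightarrow> \<tau><\<delta> \<Longrightarrow> s \<in> {lo \<tau>..lo \<tau>+\<tau>} \<Longrightarrow>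
                 hq N Kk (G s ** Y) Y + hq N Kk Y (G s ** Y) = L"
    and Gb: "\<And>\<tau> s. 0<\<tau> \<Longrightarrow> \<tau><\<delta> \<Longrightarrow> s \<in> {lo \<tau>..lo \<tau>+\<tau>} \<Longrightarrow> norm (G s) \<le> KG"
    and Db: "\<And>\<tau> s. 0<\<tau> \<Longrightarrow> \<tau><\<delta> \<Longrightarrow> s \<in> {lo \<tau>..lo \<tau>+\<tau>} \<Longrightarrow> norm (D s) \<le> KD * \<tau>"
    and Fb: "\<And>\<tau> s. 0<\<tau> \<Longrightarrow> \<tau><\<delta> \<Longrightarrow> s \<in> {lo \<tau>..lo \<tau>+\<tau>} \<Longrightarrow> norm (F s) \<le> KF"
  shows "L = 0"
proof -
  note hb = bb_hq[of N Kk]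
  obtain Kh where Kh: "Kh > 0" "\<And>a b. norm (hq N Kk a b) \<le> norm a * norm b * Kh"
    using bb_obtain[OF hb] by metis
  obtain Km where Km: "Km > 0" "\<And>(a::cmat4) (b::cmat4). norm (a ** b) \<le> norm a * norm b * Km"
    using bb_obtain[OF bb_mult] by metis
  define \<Psi> where "\<Psi> E = \<sigma> * (hq N Kk E Y + hq N Kk Y E)" for E
  define Q where "Q E = hq N Kk E E" for E
  have s2: "\<sigma> * \<sigma> = 1" using sg by auto
  have "linear \<Psi>"
    by (rule linearI) (simp_all add: \<Psi>_def bounded_bilinear.add_left[OF hb] bounded_bilinear.add_right[OF hb] bounded_bilinear.scaleR_left[OF hb] bounded_bilinear.scaleR_right[OF hb] algebra_simps)
  then have bl: "bounded_linear \<Psi>" using linear_conv_bounded_linear by blast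
  define K where "K = \<bar>KF\<bar> + 2 * Km * \<bar>KG\<bar> * \<bar>KD\<bar> * norm Y * Kh + Kh"
  have Mnn: "0 \<le> 2 * Km * \<bar>KG\<bar> * \<bar>KD\<bar> * norm Y * Kh" using Kh Km by simp
  have K0: "K \<ge> 0" using Kh Km by (simp add: K_def)
  show ?thesis
  proof -
    have "\<sigma> * L = 0"
    proof (rule key[where \<Psi> = \<Psi> and Q = Q and F = F and e = e and lo = lo and \<delta> = \<delta> and K = K])
      show "bounded_linear \<Psi>" by (rule bl)
      show "0 < \<delta>" by (rule dpos)
      show "0 \<le> K" by (rule K0)
      show "(F has_integral e \<tau>) {lo \<tau>..lo \<tau> + \<tau>}" if "0 < \<tau>" "\<tau> < \<delta>" for \<tau>
        using int that .
      show "norm (F s) \<le> K" if "0 < \<tau>" "\<tau> < \<delta>" "s \<in> {lo \<tau>..lo \<tau> + \<tau>}" for \<tau> s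
        using Fb[OF that] Kh Mnn abs_ge_self[of KF] unfolding K_def by linarith
      show "\<bar>\<Psi> (F s) - \<sigma> * L\<bar> \<le> K * \<tau>" if t: "0 < \<tau>" "\<tau> < \<delta>" "s \<in> {lo \<tau>..lo \<tau> + \<tau>}" for \<tau> s
      proof -
        have "\<Psi> (F s) - \<sigma> * L = \<sigma> * (hq N Kk (G s ** D s) Y + hq N Kk Y (G s ** D s))"
        proof -
          have "\<Psi> (F s) = \<sigma> * (hq N Kk (G s ** Y) Y + hq N Kk Y (G s ** Y)) + \<sigma> * (hq N Kk (G s ** D s) Y + hq N Kk Y (G s ** D s))"
            using Fdec[OF t] by (simp add: \<Psi>_def bounded_bilinear.add_left[OF hb] bounded_bilinear.add_right[OF hb] algebra_simps)
          then show ?thesis using Lval[OF t] by simp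
        qed
        then have "\<bar>\<Psi> (F s) - \<sigma> * L\<bar> = \<bar>hq N Kk (G s ** D s) Y + hq N Kk Y (G s ** D s)\<bar>"
          using sg by (auto simp: abs_mult)
        also have "\<dots> \<le> norm (G s ** D s) * norm Y * Kh + norm Y * norm (G s ** D s) * Kh"
          using Kh(2)[of "G s ** D s" Y] Kh(2)[of Y "G s ** D s"] abs_triangle_ineq[of "hq N Kk (G s ** D s) Y" "hq N Kk Y (G s ** D s)"] by (simp only: real_norm_def)
        also have "\<dots> = 2 * norm Y * Kh * norm (G s ** D s)" by simp
        also have "\<dots> \<le> 2 * norm Y * Kh * (norm (G s) * norm (D s) * Km)"
          using Km(2) Kh by (intro mult_left_mono) auto
        also have "\<dots> \<le> 2 * norm Y * Kh * (\<bar>KG\<bar> * (\<bar>KD\<bar> * \<tau>) * Km)"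
        proof -
          have "norm (G s) \<le> \<bar>KG\<bar>" using Gb[OF t] by linarith
          moreover have "norm (D s) \<le> \<bar>KD\<bar> * \<tau>" using Db[OF t] t(1)
            by (meson abs_ge_self mult_right_mono less_imp_le order_trans)
          ultimately have "norm (G s) * norm (D s) \<le> \<bar>KG\<bar> * (\<bar>KD\<bar> * \<tau>)"
            by (intro mult_mono) auto
          then show ?thesis using Kh Km by (intro mult_left_mono mult_right_mono) auto
        qed
        also have "\<dots> = (2 * Km * \<bar>KG\<bar> * \<bar>KD\<bar> * norm Y * Kh) * \<tau>" by simp
        also have "\<dots> \<le> K * \<tau>" unfolding K_def using t Kh
          by (intro mult_right_mono) auto
        finally show ?thesis .
      qed
      show "\<bar>Q E\<bar> \<le> K * (norm E)\<^sup>2" for E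
      proof -
        have "\<bar>Q E\<bar> \<le> norm E * norm E * Kh" using Kh(2)[of E E] by (simp add: Q_def)
        also have "\<dots> \<le> norm E * norm E * K"
        proof (rule mult_left_mono)
          show "Kh \<le> K" using Mnn abs_ge_zero[of KF] unfolding K_def by linarith
        qed simp
        also have "\<dots> = K * (norm E)\<^sup>2" by (simp add: power2_eq_square)
        finally show ?thesis .
      qed
      show "\<Psi> (e \<tau>) + Q (e \<tau>) = 0" if t: "0 < \<tau>" "\<tau> < \<delta>" for \<tau>
      proof -
        have "hq N Kk (Z \<tau>) (Z \<tau>) = hq N Kk Y Y + \<sigma> * (hq N Kk (e \<tau>) Y + hq N Kk Y (e \<tau>)) + (\<sigma> * \<sigma>) * hq N Kk (e \<tau>) (e \<tau>)"
          using Zrel[OF t] by (simp add: bounded_bilinear.add_left[OF hb] bounded_bilinear.add_right[OF hb] bounded_bilinear.scaleR_left[OF hb] bounded_bilinear.scaleR_right[OF hb] algebra_simps)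
        then show ?thesis using zero[OF t] base s2 by (simp add: \<Psi>_def Q_def)
      qed
    qed
    then show ?thesis using sg by auto
  qed
qed


lemma lam_lemma:
  fixes g \<beta> :: "real \<Rightarrow> real"
  assumes tf: "tf > 0" and t0: "t0 \<in> {0..tf}"
    and cg: "continuous_on {0..tf} g" and cb: "continuous_on {0..tf} \<beta>" and b0: "\<beta> t0 = 0"
    and AE: "AE t in lebesgue. t \<in> {0..tf} \<longrightarrow> (g t \<le> lam \<and> lam \<le> g t + \<beta> t)"
  shows "lam = g t0"
proof (rule ccontr)
  assume ne: "lam \<noteq> g t0"
  define e where "e = \<bar>lam - g t0\<bar> / 2"
  have e: "e > 0" using ne by (simp add: e_def)
  obtain d1 where d1: "d1 > 0" "\<And>t. t \<in> {0..tf} \<Longrightarrow> dist t t0 < d1 \<Longrightarrow> dist (g t) (g t0) < e"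
    using cg t0 e unfolding continuous_on_iff by metis
  obtain d2 where d2: "d2 > 0" "\<And>t. t \<in> {0..tf} \<Longrightarrow> dist t t0 < d2 \<Longrightarrow> dist (\<beta> t) (\<beta> t0) < e"
    using cb t0 e unfolding continuous_on_iff by metis
  define d where "d = min d1 d2"
  have d: "d > 0" using d1 d2 by (simp add: d_def)
  define a' where "a' = max 0 (t0 - d/2)"
  define b' where "b' = min tf (t0 + d/2)"
  have ab: "a' < b'" using t0 tf d by (auto simp: a'_def b'_def)
  have bad: "\<forall>t\<in>{a'..b'}. \<not> (t \<in> {0..tf} \<longrightarrow> (g t \<le> lam \<and> lam \<le> g t + \<beta> t))"
  proof
    fix t assume t: "t \<in> {a'..b'}"
    have tin: "t \<in> {0..tf}" using t by (auto simp: a'_def b'_def)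
    have dt: "dist t t0 < d1" "dist t t0 < d2" using t d by (auto simp: a'_def b'_def d_def dist_real_def)
    have g1: "\<bar>g t - g t0\<bar> < e" using d1(2)[OF tin dt(1)] by (simp add: dist_real_def)
    have g2: "\<bar>\<beta> t\<bar> < e" using d2(2)[OF tin dt(2)] b0 by (simp add: dist_real_def)
    show "\<not> (t \<in> {0..tf} \<longrightarrow> (g t \<le> lam \<and> lam \<le> g t + \<beta> t))"
    proof
      assume "t \<in> {0..tf} \<longrightarrow> (g t \<le> lam \<and> lam \<le> g t + \<beta> t)"
      with tin have "g t \<le> lam" "lam \<le> g t + \<beta> t" by auto
      then show False using g1 g2 e_def ne by (auto simp: abs_less_iff abs_if split: if_split_asm)
    qed
  qed
  show False by (rule AE_interval_False[OF AE ab bad])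
qed


theorem proposition4:
  fixes \<omega>0 \<gamma> tf \<phi> :: real
    and ux uy uz :: "real \<Rightarrow> real"
    and X :: "real \<Rightarrow> cmat4"
    and Y1 Y2 :: cmat2
    and M :: cmat4
  assumes "\<omega>0 > 0" and "\<gamma> > 0" and "tf > 0"
    and "admissible \<gamma> tf ux uy uz"
    and "trajectory \<omega>0 tf ux uy uz X"
    and "extremal \<omega>0 \<gamma> tf ux uy uz X M"
    and "Y1 \<in> {Xf \<phi>, - Xf \<phi>}" and "Y2 \<in> {Xf \<phi>, - Xf \<phi>}"
    and "X tf = blockdiag Y1 Y2"
  shows "\<not> (\<exists>\<epsilon>>0. \<epsilon> \<le> tf \<and> (\<forall>t\<in>{0..<\<epsilon>}.
                 pcoef M (X t) Bx = 0 \<and> pcoef M (X t) By = 0 \<and> pcoef M (X t) Bz = 0)) \<and>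
           \<not> (\<exists>\<epsilon>>0. \<epsilon> \<le> tf \<and> (\<forall>t\<in>{tf-\<epsilon><..tf}.
                 pcoef M (X t) Bx = 0 \<and> pcoef M (X t) By = 0 \<and> pcoef M (X t) Bz = 0))"
proof -
  note w0 = assms(1) and g0 = assms(2) and tf0 = assms(3)
  define G where "G s = csc (-\<i>) (Hsys \<omega>0 (ux s) (uy s) (uz s))" for s
  define F where "F s = G s ** X s" for s
  have traj: "\<And>t. t \<in> {0..tf} \<Longrightarrow> (F has_integral (X t - mat 1)) {0..t}"
  proof -
    have "F = (\<lambda>s. csc (-\<i>) (Hsys \<omega>0 (ux s) (uy s) (uz s) ** X s))"
      by (simp add: fun_eq_iff F_def G_def csc_mult_left)
    then show "\<And>t. t \<in> {0..tf} \<Longrightarrow> (F has_integral (X t - mat 1)) {0..t}"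
      using assms(5) by (simp add: trajectory_def)
  qed
  from assms(6) obtain lam where Ml: "M \<in> lie_l" and Mnz: "M \<noteq> 0" and AE:
    "AE t in lebesgue. t \<in> {0..tf} \<longrightarrow>
        ((\<forall>vx vy vz. vx\<^sup>2 + vy\<^sup>2 + vz\<^sup>2 \<le> \<gamma>\<^sup>2 \<longrightarrow>
            pmp_H \<omega>0 M (X t) (ux t) (uy t) (uz t) \<ge> pmp_H \<omega>0 M (X t) vx vy vz) \<and>
         pmp_H \<omega>0 M (X t) (ux t) (uy t) (uz t) = lam)"
    unfolding extremal_def by blast
  from Ml obtain a1 a2 a3 c1 c2 c3 where Mdef: "M = Mof a1 a2 a3 c1 c2 c3"
    unfolding lie_l_def Mof_def by blast
  have X0: "X 0 = mat 1"
  proof -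
    have "(F has_integral (X 0 - mat 1)) {0..0}" using traj[of 0] tf0 by simp
    moreover have "(F has_integral 0) {0..0}" using has_integral_refl(2)[of F "0::real"] by simp
    ultimately have "X 0 - mat 1 = 0" using has_integral_unique by blast
    then show ?thesis by simp
  qed
  have Fint: "F integrable_on {0..tf}" using traj[of tf] tf0 by auto
  have Xeq: "X t = mat 1 + integral {0..t} F" if "t \<in> {0..tf}" for t
  proof -
    have "integral {0..t} F = X t - mat 1" using traj[OF that] by (rule integral_unique)
    then show ?thesis by simp
  qed
  have Xcont: "continuous_on {0..tf} X"
  proof -
    have "continuous_on {0..tf} (\<lambda>t. mat 1 + integral {0..t} F)"
      by (intro continuous_intros indefinite_integral_continuous_1 Fint)
    then show ?thesis by (rule continuous_on_eq) (simp add: Xeq)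
  qed
  obtain KX where KX: "\<And>t. t \<in> {0..tf} \<Longrightarrow> norm (X t) \<le> KX"
  proof -
    have "bounded (X ` {0..tf})" by (intro compact_imp_bounded compact_continuous_image Xcont compact_Icc)
    then show ?thesis using that unfolding bounded_iff by blast
  qed
  have KX0: "KX \<ge> 0"
  proof -
    have "norm (X 0) \<le> KX" using tf0 by (intro KX) auto
    then show ?thesis using norm_ge_zero[of "X 0"] by linarith
  qed
  have ubd: "\<bar>ux s\<bar> \<le> \<gamma> \<and> \<bar>uy s\<bar> \<le> \<gamma> \<and> \<bar>uz s\<bar> \<le> \<gamma>" if "s \<in> {0..tf}" for s
  proof -
    have h: "(ux s)\<^sup>2 + (uy s)\<^sup>2 + (uz s)\<^sup>2 \<le> \<gamma>\<^sup>2" using assms(4) that by (simp add: admissible_def)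
    have "(ux s)\<^sup>2 \<le> \<gamma>\<^sup>2" "(uy s)\<^sup>2 \<le> \<gamma>\<^sup>2" "(uz s)\<^sup>2 \<le> \<gamma>\<^sup>2"
      using h by (smt (verit) zero_le_power2)+
    then show ?thesis using g0 power2_le_imp_le[of "\<bar>ux s\<bar>" \<gamma>] power2_le_imp_le[of "\<bar>uy s\<bar>" \<gamma>] power2_le_imp_le[of "\<bar>uz s\<bar>" \<gamma>] by simp
  qed
  obtain Kc where Kc: "Kc > 0" "\<And>A::cmat4. norm (csc (-\<i>) A) \<le> norm A * Kc"
    using bounded_linear.pos_bounded[OF bl_csc[of "-\<i>"]] by blast
  define KG where "KG = (\<omega>0 * norm Cz + \<gamma> * norm Bx + \<gamma> * norm By + \<gamma> * norm Bz) * Kc"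
  have KG: "norm (G s) \<le> KG" if "s \<in> {0..tf}" for s
  proof -
    have "norm (Hsys \<omega>0 (ux s) (uy s) (uz s)) \<le> \<omega>0 * norm Cz + \<bar>ux s\<bar> * norm Bx + \<bar>uy s\<bar> * norm By + \<bar>uz s\<bar> * norm Bz"
      unfolding Hsys_def using w0
      by (smt (verit) norm_scaleR norm_triangle_ineq)
    also have "\<dots> \<le> \<omega>0 * norm Cz + \<gamma> * norm Bx + \<gamma> * norm By + \<gamma> * norm Bz"
      using ubd[OF that] by (intro add_mono mult_right_mono) auto
    finally have "norm (Hsys \<omega>0 (ux s) (uy s) (uz s)) * Kc \<le> (\<omega>0 * norm Cz + \<gamma> * norm Bx + \<gamma> * norm By + \<gamma> * norm Bz) * Kc"
      using Kc by (intro mult_right_mono) auto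
    then show ?thesis using Kc(2)[of "Hsys \<omega>0 (ux s) (uy s) (uz s)"] unfolding G_def KG_def by linarith
  qed
  have KG0: "KG \<ge> 0"
  proof -
    have "norm (G 0) \<le> KG" using tf0 by (intro KG) auto
    then show ?thesis using norm_ge_zero[of "G 0"] by linarith
  qed
  obtain Km where Km: "Km > 0" "\<And>(a::cmat4) (b::cmat4). norm (a ** b) \<le> norm a * norm b * Km"
    using bb_obtain[OF bb_mult] by metis
  define KF where "KF = KG * KX * Km"
  have KF0: "KF \<ge> 0" using KG0 KX0 Km by (simp add: KF_def)
  have KF: "norm (F s) \<le> KF" if "s \<in> {0..tf}" for s
  proof -
    have "norm (F s) \<le> norm (G s) * norm (X s) * Km" unfolding F_def by (rule Km(2))
    also have "\<dots> \<le> KG * KX * Km" using KG[OF that] KX[OF that] Km KG0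
      by (intro mult_right_mono mult_mono) auto
    finally show ?thesis by (simp add: KF_def)
  qed
  have dist0: "norm (X t - mat 1) \<le> KF * t" if "t \<in> {0..tf}" for t
  proof -
    have "norm (X t - mat 1) \<le> KF * Henstock_Kurzweil_Integration.content (cbox 0 t)"
      using traj[OF that] KF0 KF that by (intro has_integral_bound[where f = F]) (auto simp: cbox_interval)
    then show ?thesis using that by (simp add: cbox_interval content_real)
  qed
  have trajtf: "(F has_integral (X tf - X t)) {t..tf}" if "t \<in> {0..tf}" for t
  proof -
    have "integral {0..t} F + integral {t..tf} F = integral {0..tf} F"
      using that Fint by (intro Henstock_Kurzweil_Integration.integral_combine) auto
    then have eq: "integral {t..tf} F = X tf - X t" using Xeq[OF that] Xeq[of tf] tf0 by (simp add: algebra_simps)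
    have "F integrable_on {t..tf}" using that by (intro integrable_subinterval_real[OF Fint]) auto
    then have "(F has_integral integral {t..tf} F) {t..tf}" by (rule integrable_integral)
    then show ?thesis by (simp only: eq)
  qed
  have disttf: "norm (X s - X tf) \<le> KF * (tf - s)" if "s \<in> {0..tf}" for s
  proof -
    have "norm (X tf - X s) \<le> KF * Henstock_Kurzweil_Integration.content (cbox s tf)"
      using trajtf[OF that] KF0 KF that by (intro has_integral_bound[where f = F]) (auto simp: cbox_interval)
    then show ?thesis using that by (simp add: cbox_interval content_real norm_minus_commute)
  qed
  define bx where "bx t = pcoef M (X t) Bx" for t
  define by' where "by' t = pcoef M (X t) By" for t
  define bz where "bz t = pcoef M (X t) Bz" for t
  define cz where "cz t = pcoef M (X t) Cz" for t
  have contp: "continuous_on {0..tf} (\<lambda>t. pcoef M (X t) K)" for K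
    unfolding pcoef_hq by (rule bounded_bilinear.continuous_on[OF bb_hq Xcont Xcont])
  have sandwich: "AE t in lebesgue. t \<in> {0..tf} \<longrightarrow>
      (\<omega>0 * cz t \<le> lam \<and> lam \<le> \<omega>0 * cz t + \<gamma> * (\<bar>bx t\<bar> + \<bar>by' t\<bar> + \<bar>bz t\<bar>))"
    using AE
  proof eventually_elim
    case (elim t)
    show ?case
    proof
      assume tin: "t \<in> {0..tf}"
      with elim have max: "\<And>vx vy vz. vx\<^sup>2 + vy\<^sup>2 + vz\<^sup>2 \<le> \<gamma>\<^sup>2 \<Longrightarrow>
            pmp_H \<omega>0 M (X t) (ux t) (uy t) (uz t) \<ge> pmp_H \<omega>0 M (X t) vx vy vz"
        and eq: "pmp_H \<omega>0 M (X t) (ux t) (uy t) (uz t) = lam" by auto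
      have "pmp_H \<omega>0 M (X t) 0 0 0 \<le> lam" using max[of 0 0 0] eq by simp
      then have 1: "\<omega>0 * cz t \<le> lam" by (simp add: pmp_H_def cz_def)
      have u: "\<bar>ux t\<bar> \<le> \<gamma>" "\<bar>uy t\<bar> \<le> \<gamma>" "\<bar>uz t\<bar> \<le> \<gamma>" using ubd[OF tin] by auto
      have "ux t * bx t \<le> \<gamma> * \<bar>bx t\<bar>"
        by (rule order_trans[OF abs_ge_self]) (simp add: abs_mult mult_right_mono u)
      moreover have "uy t * by' t \<le> \<gamma> * \<bar>by' t\<bar>"
        by (rule order_trans[OF abs_ge_self]) (simp add: abs_mult mult_right_mono u)
      moreover have "uz t * bz t \<le> \<gamma> * \<bar>bz t\<bar>"
        by (rule order_trans[OF abs_ge_self]) (simp add: abs_mult mult_right_mono u)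
      ultimately have 2: "lam \<le> \<omega>0 * cz t + \<gamma> * (\<bar>bx t\<bar> + \<bar>by' t\<bar> + \<bar>bz t\<bar>)"
        using eq by (simp add: pmp_H_def cz_def bx_def by'_def bz_def algebra_simps)
      show "\<omega>0 * cz t \<le> lam \<and> lam \<le> \<omega>0 * cz t + \<gamma> * (\<bar>bx t\<bar> + \<bar>by' t\<bar> + \<bar>bz t\<bar>)"
        using 1 2 by simp
    qed
  qed
  have lamat: "lam = \<omega>0 * cz t0" if t0: "t0 \<in> {0..tf}" and b0: "bx t0 = 0" "by' t0 = 0" "bz t0 = 0" for t0
  proof (rule lam_lemma[OF tf0 t0 _ _ _ sandwich])
    show "continuous_on {0..tf} (\<lambda>t. \<omega>0 * cz t)" unfolding cz_def by (intro continuous_intros contp)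
    show "continuous_on {0..tf} (\<lambda>t. \<gamma> * (\<bar>bx t\<bar> + \<bar>by' t\<bar> + \<bar>bz t\<bar>))"
      unfolding bx_def by'_def bz_def by (intro continuous_intros contp)
    show "\<gamma> * (\<bar>bx t0\<bar> + \<bar>by' t0\<bar> + \<bar>bz t0\<bar>) = 0" using b0 by simp
  qed
  have at0: "bx 0 = - a1" "by' 0 = - a2" "bz 0 = - a3" "cz 0 = - c3"
    by (simp_all add: bx_def by'_def bz_def cz_def X0 Mdef at_one)
  define kk where "kk = cos \<phi> * cos \<phi> - sin \<phi> * sin \<phi>"
  define mm where "mm = 2 * sin \<phi> * cos \<phi>"
  have km: "kk * kk + mm * mm = 1"
  proof -
    have "kk * kk + mm * mm = (cos \<phi> * cos \<phi> + sin \<phi> * sin \<phi>) * (cos \<phi> * cos \<phi> + sin \<phi> * sin \<phi>)"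
      unfolding kk_def mm_def by algebra
    then show ?thesis by (simp add: sin_cos_squared_add3)
  qed
  have attf: "bx tf = a1 * kk - a2 * mm" "by' tf = - a2 * kk - a1 * mm" "bz tf = a3" "cz tf = c3"
    using at_Y[OF assms(7,8), of a1 a2 a3 c1 c2 c3]
    by (simp_all add: bx_def by'_def bz_def cz_def assms(9) Mdef kk_def mm_def)
  have tf_in: "tf \<in> {0..tf}" and z_in: "0 \<in> {0..tf}" using tf0 by auto
  have c3z: "c3 = 0" if "a1 = 0" "a2 = 0" "a3 = 0"
  proof -
    have "lam = \<omega>0 * cz 0" using lamat[OF z_in] at0 that by simp
    moreover have "lam = \<omega>0 * cz tf" using lamat[OF tf_in] attf that by simp
    ultimately have "\<omega>0 * (- c3) = \<omega>0 * c3" using at0 attf by simp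
    then show ?thesis using w0 by simp
  qed
  have dstart: "L = 0"
    if ep: "\<epsilon> > 0" "\<epsilon> \<le> tf" and base: "hq M Kk (mat 1) (mat 1) = 0"
      and zero: "\<And>t. t \<in> {0..<\<epsilon>} \<Longrightarrow> pcoef M (X t) Kk = 0"
      and Lv: "\<And>s. hq M Kk (G s ** mat 1) (mat 1) + hq M Kk (mat 1) (G s ** mat 1) = L" for Kk L \<epsilon>
  proof -
    have i1: "\<And>\<tau>. 0 < \<tau> \<Longrightarrow> \<tau> < \<epsilon> \<Longrightarrow> (F has_integral (X \<tau> - mat 1)) {0..0 + \<tau>}"
      using traj ep by simp
    have i2: "\<And>\<tau>. 0 < \<tau> \<Longrightarrow> \<tau> < \<epsilon> \<Longrightarrow> X \<tau> = mat 1 + (1::real) *\<^sub>R (X \<tau> - mat 1)"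
      by simp
    have i3: "\<And>\<tau>. 0 < \<tau> \<Longrightarrow> \<tau> < \<epsilon> \<Longrightarrow> hq M Kk (X \<tau>) (X \<tau>) = 0"
      using zero by (simp add: pcoef_hq)
    have i4: "\<And>\<tau> s. 0 < \<tau> \<Longrightarrow> \<tau> < \<epsilon> \<Longrightarrow> s \<in> {0..0 + \<tau>} \<Longrightarrow> F s = G s ** mat 1 + G s ** (X s - mat 1)"
      by (simp add: F_def matrix_diff_ldistrib)
    have i5: "\<And>\<tau> s. 0 < \<tau> \<Longrightarrow> \<tau> < \<epsilon> \<Longrightarrow> s \<in> {0..0 + \<tau>} \<Longrightarrow>
       hq M Kk (G s ** mat 1) (mat 1) + hq M Kk (mat 1) (G s ** mat 1) = L"
      using Lv by simp
    have i6: "\<And>\<tau> s. 0 < \<tau> \<Longrightarrow> \<tau> < \<epsilon> \<Longrightarrow> s \<in> {0..0 + \<tau>} \<Longrightarrow> norm (G s) \<le> KG"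
      using KG ep by simp
    have i7: "\<And>\<tau> s. 0 < \<tau> \<Longrightarrow> \<tau> < \<epsilon> \<Longrightarrow> s \<in> {0..0 + \<tau>} \<Longrightarrow> norm (X s - mat 1) \<le> KF * \<tau>"
    proof -
      fix \<tau> s assume t: "0 < \<tau>" "\<tau> < \<epsilon>" "s \<in> {0..0 + \<tau>}"
      then have "s \<in> {0..tf}" using ep by auto
      then have "norm (X s - mat 1) \<le> KF * s" by (rule dist0)
      also have "\<dots> \<le> KF * \<tau>" using t KF0 by (intro mult_left_mono) auto
      finally show "norm (X s - mat 1) \<le> KF * \<tau>" .
    qed
    have i8: "\<And>\<tau> s. 0 < \<tau> \<Longrightarrow> \<tau> < \<epsilon> \<Longrightarrow> s \<in> {0..0 + \<tau>} \<Longrightarrow> norm (F s) \<le> KF"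
      using KF ep by simp
    show ?thesis
      by (rule deriv_lemma[where N = M and Kk = Kk and Y = "mat 1" and \<delta> = \<epsilon> and \<sigma> = 1
            and lo = "\<lambda>\<tau>. 0" and e = "\<lambda>\<tau>. X \<tau> - mat 1" and Z = X and F = F and G = G
            and D = "\<lambda>s. X s - mat 1" and KG = KG and KD = KF and KF = KF and L = L,
            OF ep(1) _ i1 i2 i3 base i4 i5 i6 i7 i8]) simp
  qed
  have dend: "L = 0"
    if ep: "\<epsilon> > 0" "\<epsilon> \<le> tf" and base: "hq M Kk (X tf) (X tf) = 0"
      and zero: "\<And>t. t \<in> {tf-\<epsilon><..tf} \<Longrightarrow> pcoef M (X t) Kk = 0"
      and Lv: "\<And>s. hq M Kk (G s ** X tf) (X tf) + hq M Kk (X tf) (G s ** X tf) = L" for Kk L \<epsilon>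
  proof -
    have i1: "\<And>\<tau>. 0 < \<tau> \<Longrightarrow> \<tau> < \<epsilon> \<Longrightarrow> (F has_integral (X tf - X (tf - \<tau>))) {tf - \<tau>..tf - \<tau> + \<tau>}"
      using trajtf ep by simp
    have i2: "\<And>\<tau>. 0 < \<tau> \<Longrightarrow> \<tau> < \<epsilon> \<Longrightarrow> X (tf - \<tau>) = X tf + (-1::real) *\<^sub>R (X tf - X (tf - \<tau>))"
      by simp
    have i3: "\<And>\<tau>. 0 < \<tau> \<Longrightarrow> \<tau> < \<epsilon> \<Longrightarrow> hq M Kk (X (tf - \<tau>)) (X (tf - \<tau>)) = 0"
      using zero by (simp add: pcoef_hq)
    have i4: "\<And>\<tau> s. 0 < \<tau> \<Longrightarrow> \<tau> < \<epsilon> \<Longrightarrow> s \<in> {tf - \<tau>..tf - \<tau> + \<tau>} \<Longrightarrow> F s = G s ** X tf + G s ** (X s - X tf)"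
      by (simp add: F_def matrix_diff_ldistrib)
    have i5: "\<And>\<tau> s. 0 < \<tau> \<Longrightarrow> \<tau> < \<epsilon> \<Longrightarrow> s \<in> {tf - \<tau>..tf - \<tau> + \<tau>} \<Longrightarrow>
       hq M Kk (G s ** X tf) (X tf) + hq M Kk (X tf) (G s ** X tf) = L"
      using Lv by simp
    have i6: "\<And>\<tau> s. 0 < \<tau> \<Longrightarrow> \<tau> < \<epsilon> \<Longrightarrow> s \<in> {tf - \<tau>..tf - \<tau> + \<tau>} \<Longrightarrow> norm (G s) \<le> KG"
      using KG ep by simp
    have i7: "\<And>\<tau> s. 0 < \<tau> \<Longrightarrow> \<tau> < \<epsilon> \<Longrightarrow> s \<in> {tf - \<tau>..tf - \<tau> + \<tau>} \<Longrightarrow> norm (X s - X tf) \<le> KF * \<tau>"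
    proof -
      fix \<tau> s assume t: "0 < \<tau>" "\<tau> < \<epsilon>" "s \<in> {tf - \<tau>..tf - \<tau> + \<tau>}"
      then have "s \<in> {0..tf}" using ep by auto
      then have "norm (X s - X tf) \<le> KF * (tf - s)" by (rule disttf)
      also have "\<dots> \<le> KF * \<tau>" using t KF0 by (intro mult_left_mono) auto
      finally show "norm (X s - X tf) \<le> KF * \<tau>" .
    qed
    have i8: "\<And>\<tau> s. 0 < \<tau> \<Longrightarrow> \<tau> < \<epsilon> \<Longrightarrow> s \<in> {tf - \<tau>..tf - \<tau> + \<tau>} \<Longrightarrow> norm (F s) \<le> KF"
      using KF ep by simp
    show ?thesis
      by (rule deriv_lemma[where N = M and Kk = Kk and Y = "X tf" and \<delta> = \<epsilon> and \<sigma> = "-1"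
            and lo = "\<lambda>\<tau>. tf - \<tau>" and e = "\<lambda>\<tau>. X tf - X (tf - \<tau>)" and Z = "\<lambda>\<tau>. X (tf - \<tau>)" and F = F and G = G
            and D = "\<lambda>s. X s - X tf" and KG = KG and KD = KF and KF = KF and L = L,
            OF ep(1) _ i1 i2 i3 base i4 i5 i6 i7 i8]) simp
  qed
  show ?thesis
  proof (intro conjI notI)
    assume "\<exists>\<epsilon>>0. \<epsilon> \<le> tf \<and> (\<forall>t\<in>{0..<\<epsilon>}.
                 pcoef M (X t) Bx = 0 \<and> pcoef M (X t) By = 0 \<and> pcoef M (X t) Bz = 0)"
    then obtain \<epsilon> where ep: "\<epsilon> > 0" "\<epsilon> \<le> tf" and sing: "\<And>t. t \<in> {0..<\<epsilon>} \<Longrightarrow>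
                 pcoef M (X t) Bx = 0 \<and> pcoef M (X t) By = 0 \<and> pcoef M (X t) Bz = 0" by blast
    have "bx 0 = 0" "by' 0 = 0" "bz 0 = 0" using sing[of 0] ep by (auto simp: bx_def by'_def bz_def)
    then have a0: "a1 = 0" "a2 = 0" "a3 = 0" using at0 by auto
    have c30: "c3 = 0" using c3z a0 .
    have Ma: "M = Mof 0 0 0 c1 c2 c3" using Mdef a0 by simp
    have "c2 * \<omega>0 = 0"
    proof (rule dstart[OF ep])
      show "hq M Bx (mat 1) (mat 1) = 0" using at0 a0 X0 by (simp add: bx_def pcoef_hq)
      show "\<And>t. t \<in> {0..<\<epsilon>} \<Longrightarrow> pcoef M (X t) Bx = 0" using sing by blast
      show "\<And>s. hq M Bx (G s ** mat 1) (mat 1) + hq M Bx (mat 1) (G s ** mat 1) = c2 * \<omega>0"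
        unfolding Ma G_def using L_one(1) by simp
    qed
    then have c20: "c2 = 0" using w0 by simp
    have "- c1 * \<omega>0 = 0"
    proof (rule dstart[OF ep])
      show "hq M By (mat 1) (mat 1) = 0" using at0 a0 X0 by (simp add: by'_def pcoef_hq)
      show "\<And>t. t \<in> {0..<\<epsilon>} \<Longrightarrow> pcoef M (X t) By = 0" using sing by blast
      show "\<And>s. hq M By (G s ** mat 1) (mat 1) + hq M By (mat 1) (G s ** mat 1) = - c1 * \<omega>0"
        unfolding Ma G_def using L_one(2) by simp
    qed
    then have c10: "c1 = 0" using w0 by simp
    have "M = 0" using Mdef a0 c10 c20 c30 Mof_zero by simp
    then show False using Mnz by simp
  next
    assume "\<exists>\<epsilon>>0. \<epsilon> \<le> tf \<and> (\<forall>t\<in>{tf-\<epsilon><..tf}.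
                 pcoef M (X t) Bx = 0 \<and> pcoef M (X t) By = 0 \<and> pcoef M (X t) Bz = 0)"
    then obtain \<epsilon> where ep: "\<epsilon> > 0" "\<epsilon> \<le> tf" and sing: "\<And>t. t \<in> {tf-\<epsilon><..tf} \<Longrightarrow>
                 pcoef M (X t) Bx = 0 \<and> pcoef M (X t) By = 0 \<and> pcoef M (X t) Bz = 0" by blast
    have btf: "bx tf = 0" "by' tf = 0" "bz tf = 0" using sing[of tf] ep by (auto simp: bx_def by'_def bz_def)
    have a30: "a3 = 0" using btf attf by simp
    have e1: "a1 * kk - a2 * mm = 0" "- a2 * kk - a1 * mm = 0" using btf attf by simp_all
    have "a1 = a1 * (kk * kk + mm * mm)" using km by simp
    also have "\<dots> = kk * (a1 * kk - a2 * mm) - mm * (- a2 * kk - a1 * mm)" by algebra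
    finally have a10: "a1 = 0" using e1 by simp
    have "a2 = a2 * (kk * kk + mm * mm)" using km by simp
    also have "\<dots> = - mm * (a1 * kk - a2 * mm) - kk * (- a2 * kk - a1 * mm)" by algebra
    finally have a20: "a2 = 0" using e1 by simp
    have c30: "c3 = 0" using c3z a10 a20 a30 .
    have Ma: "M = Mof 0 0 0 c1 c2 c3" using Mdef a10 a20 a30 by simp
    have f1: "\<omega>0 * (c2 * kk + c1 * mm) = 0"
    proof (rule dend[OF ep])
      show "hq M Bx (X tf) (X tf) = 0" using btf by (simp add: bx_def pcoef_hq)
      show "\<And>t. t \<in> {tf-\<epsilon><..tf} \<Longrightarrow> pcoef M (X t) Bx = 0" using sing by blast
      show "\<And>s. hq M Bx (G s ** X tf) (X tf) + hq M Bx (X tf) (G s ** X tf) = \<omega>0 * (c2 * kk + c1 * mm)"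
        unfolding Ma G_def assms(9) kk_def mm_def using L_Y(1)[OF assms(7,8)] by simp
    qed
    have f2: "\<omega>0 * (c1 * kk - c2 * mm) = 0"
    proof (rule dend[OF ep])
      show "hq M By (X tf) (X tf) = 0" using btf by (simp add: by'_def pcoef_hq)
      show "\<And>t. t \<in> {tf-\<epsilon><..tf} \<Longrightarrow> pcoef M (X t) By = 0" using sing by blast
      show "\<And>s. hq M By (G s ** X tf) (X tf) + hq M By (X tf) (G s ** X tf) = \<omega>0 * (c1 * kk - c2 * mm)"
        unfolding Ma G_def assms(9) kk_def mm_def using L_Y(2)[OF assms(7,8)] by simp
    qed
    have e2: "c2 * kk + c1 * mm = 0" "c1 * kk - c2 * mm = 0" using f1 f2 w0 by simp_all
    have "c1 = c1 * (kk * kk + mm * mm)" using km by simp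
    also have "\<dots> = mm * (c2 * kk + c1 * mm) + kk * (c1 * kk - c2 * mm)" by algebra
    finally have c10: "c1 = 0" using e2 by simp
    have "c2 = c2 * (kk * kk + mm * mm)" using km by simp
    also have "\<dots> = kk * (c2 * kk + c1 * mm) - mm * (c1 * kk - c2 * mm)" by algebra
    finally have c20: "c2 = 0" using e2 by simp
    have "M = 0" using Mdef a10 a20 a30 c10 c20 c30 Mof_zero by simp
    then show False using Mnz by simp
  qed
qed

end
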